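(* Let $n\geqslant 2$ and let $\alpha\in\mathcal{POI}_n$ have rank $n-1$. Then $\alpha\in\mathcal{AO}_n$ if and only if $\mathrm{d}(\alpha)$ and $\mathrm{i}(\alpha)$ have the same parity.
   Context: Let $\Omega_n=\{1<2<\cdots<n\}$. $\mathcal{I}_n$ denotes the symmetric inverse monoid of all partial injective maps (partial permutations) of $\Omega_n$, with maps written on the right and composed left to right. For $\alpha\in\mathcal{I}_n$, $\mathrm{Dom}(\alpha)$ and $\mathrm{Im}(\alpha)$ are its domain and image and its rank is $|\mathrm{Im}(\alpha)|$. $\mathcal{AI}_n$ is the set of all $\alpha\in\mathcal{I}_n$ such that $\alpha=\sigma|_{\mathrm{Dom}(\alpha)}$ for some even permutation $\sigma$ of $\Omega_n$. $\mathcal{POI}_n$ is the set of order-preserving elements of $\mathcal{I}_n$ (i.e. $x\leqslant y$ implies $x\alpha\leqslant y\alpha$ for $x,y\in\mathrm{Dom}(\alpha)$), and $\mathcal{AO}_n=\mathcal{AI}_n\cap\mathcal{POI}_n$. For $\alpha\in\mathcal{I}_n$ of rank $n-1$, $\mathrm{d}(\alpha)$ is the unique element of $\Omega_n\setminus\mathrm{Dom}(\alpha)$ and $\mathrm{i}(\alpha)$ is the unique element of $\Omega_n\setminus\mathrm{Im}(\alpha)$. *)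

theory Defs
  imports "HOL-Combinatorics.Permutations"
begin

text \<open>Partial injective maps of Omega_n = {1..n}, represented as partial maps
  nat \<Rightarrow> nat option with domain and image inside {1..n}.\<close>

definition I_n :: "nat \<Rightarrow> (nat \<Rightarrow> nat option) set" where
  "I_n n = {\<alpha>. dom \<alpha> \<subseteq> {1..n} \<and> ran \<alpha> \<subseteq> {1..n} \<and> inj_on \<alpha> (dom \<alpha>)}"

definition AI_n :: "nat \<Rightarrow> (nat \<Rightarrow> nat option) set" where
  "AI_n n = {\<alpha> \<in> I_n n. \<exists>\<sigma>. \<sigma> permutes {1..n} \<and> evenperm \<sigma> \<and>
                 (\<forall>x \<in> dom \<alpha>. \<alpha> x = Some (\<sigma> x))}"

definition POI_n :: "nat \<Rightarrow> (nat \<Rightarrow> nat option) set" where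
  "POI_n n = {\<alpha> \<in> I_n n. \<forall>x \<in> dom \<alpha>. \<forall>y \<in> dom \<alpha>. x \<le> y \<longrightarrow> the (\<alpha> x) \<le> the (\<alpha> y)}"

definition AO_n :: "nat \<Rightarrow> (nat \<Rightarrow> nat option) set" where
  "AO_n n = AI_n n \<inter> POI_n n"

definition rank :: "(nat \<Rightarrow> nat option) \<Rightarrow> nat" where
  "rank \<alpha> = card (ran \<alpha>)"

text \<open>d(alpha): the unique element of Omega_n not in Dom(alpha);
  i(alpha): the unique element of Omega_n not in Im(alpha) (for rank n-1).\<close>
definition d_elem :: "nat \<Rightarrow> (nat \<Rightarrow> nat option) \<Rightarrow> nat" where
  "d_elem n \<alpha> = the_elem ({1..n} - dom \<alpha>)"

definition i_elem :: "nat \<Rightarrow> (nat \<Rightarrow> nat option) \<Rightarrow> nat" where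
  "i_elem n \<alpha> = the_elem ({1..n} - ran \<alpha>)"

end

theory Submission
  imports Defs
begin

definition cperm :: "nat \<Rightarrow> nat \<Rightarrow> nat \<Rightarrow> nat \<Rightarrow> nat" where
  "cperm n d i x = (if x \<in> {1..n} then (if x = d then i else
      (let y = (if d < x then x - 1 else x) in if i \<le> y then y + 1 else y)) else x)"

lemma cperm_same: "d \<in> {1..n} \<Longrightarrow> cperm n d d = id"
  by (rule ext) (auto simp: cperm_def Let_def)

lemma cperm_step: "d \<in> {1..n} \<Longrightarrow> 1 \<le> i \<Longrightarrow> i + 1 \<le> n \<Longrightarrow>
   cperm n d (i+1) = Transposition.transpose i (i+1) \<circ> cperm n d i"
  by (rule ext) (auto simp: cperm_def Let_def transpose_def)

lemma cperm_props_aux: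
  assumes "d \<in> {1..n}" "1 \<le> i" "i + 1 \<le> n" "cperm n d i permutes {1..n}"
  shows "cperm n d (i+1) permutes {1..n} \<and> (evenperm (cperm n d (i+1)) \<longleftrightarrow> \<not> evenperm (cperm n d i))"
proof -
  have t: "Transposition.transpose i (i+1) permutes {1..n}"
    using assms by (intro permutes_swap_id) auto
  have p1: "permutation (cperm n d i)" using assms(4) permutation_permutes by blast
  have p2: "permutation (Transposition.transpose i (i+1))" using t permutation_permutes by blast
  show ?thesis
    unfolding cperm_step[OF assms(1-3)]
    using permutes_compose[OF assms(4) t] evenperm_comp[OF p2 p1] evenperm_swap[of i "i+1"]
    by simp
qed

lemma cperm_up:
  assumes "d \<in> {1..n}"
  shows "d + k \<le> n \<Longrightarrow> cperm n d (d+k) permutes {1..n} \<and> (evenperm (cperm n d (d+k)) \<longleftrightarrow> even k)"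
proof (induction k)
  case 0
  have e: "cperm n d (d+0) = id" using cperm_same[OF assms] by simp
  show ?case unfolding e by (intro conjI permutes_id) simp
next
  case (Suc k)
  then have "cperm n d (d+k) permutes {1..n} \<and> (evenperm (cperm n d (d+k)) \<longleftrightarrow> even k)" by simp
  moreover have "d \<ge> 1" using assms by simp
  ultimately show ?case using cperm_props_aux[OF assms, of "d+k"] Suc.prems by simp
qed

lemma cperm_down:
  assumes "d \<in> {1..n}"
  shows "k < d \<Longrightarrow> cperm n d (d-k) permutes {1..n} \<and> (evenperm (cperm n d (d-k)) \<longleftrightarrow> even k)"
proof (induction k)
  case 0
  have e: "cperm n d (d-0) = id" using cperm_same[OF assms] by simp
  show ?case unfolding e by (intro conjI permutes_id) simp
next
  case (Suc k)
  then have IH: "cperm n d (d-k) permutes {1..n} \<and> (evenperm (cperm n d (d-k)) \<longleftrightarrow> even k)" by simp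
  define j where "j = d - Suc k"
  have j: "1 \<le> j" "j + 1 \<le> n" "d - k = j + 1" using Suc.prems assms by (auto simp: j_def)
  have eq: "cperm n d j = Transposition.transpose j (j+1) \<circ> cperm n d (j+1)"
    unfolding cperm_step[OF assms j(1,2)] comp_assoc[symmetric] transpose_comp_involutory by simp
  have t: "Transposition.transpose j (j+1) permutes {1..n}"
    using j by (intro permutes_swap_id) auto
  have P: "cperm n d (j+1) permutes {1..n}" using IH j by simp
  have p1: "permutation (cperm n d (j+1))" using P permutation_permutes by blast
  have p2: "permutation (Transposition.transpose j (j+1))" using t permutation_permutes by blast
  have "cperm n d (d - Suc k) permutes {1..n} \<and> (evenperm (cperm n d (d - k)) \<longleftrightarrow> \<not> evenperm (cperm n d (d - Suc k)))"
    unfolding j(3) j_def[symmetric] eq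
    using permutes_compose[OF P t] evenperm_comp[OF p2 p1] evenperm_swap[of j "j+1"] by simp
  then show ?case using IH by simp
qed

lemma cperm_main:
  assumes "d \<in> {1..n}" "i \<in> {1..n}"
  shows "cperm n d i permutes {1..n} \<and> (evenperm (cperm n d i) \<longleftrightarrow> (even d \<longleftrightarrow> even i))"
proof (cases "d \<le> i")
  case True
  then show ?thesis using cperm_up[OF assms(1), of "i - d"] assms by auto
next
  case False
  then show ?thesis using cperm_down[OF assms(1), of "d - i"] assms by auto
qed

lemma cnt_le:
  assumes "S = {1..n} - {e}" "e \<in> {1..n}" "x \<in> S"
  shows "card {z\<in>S. z \<le> x} = x - (if e < x then 1 else 0)"
proof -
  have "{z\<in>S. z \<le> x} = {1..x} - {e}" using assms by auto
  moreover have "card ({1..x} - {e}) = x - (if e < x then 1 else 0)"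
    using assms by (auto simp: card_Diff_singleton_if)
  ultimately show ?thesis by simp
qed

theorem proposition1p1:
  fixes n :: nat and \<alpha> :: "nat \<Rightarrow> nat option"
  assumes "n \<ge> 2" and "\<alpha> \<in> POI_n n" and "rank \<alpha> = n - 1"
  shows "\<alpha> \<in> AO_n n \<longleftrightarrow> (even (d_elem n \<alpha>) \<longleftrightarrow> even (i_elem n \<alpha>))"
proof -
  define D where "D = dom \<alpha>"
  define R where "R = ran \<alpha>"
  define f where "f = (\<lambda>x. the (\<alpha> x))"
  have I: "\<alpha> \<in> I_n n" using assms(2) by (simp add: POI_n_def)
  have DS: "D \<subseteq> {1..n}" and RS: "R \<subseteq> {1..n}" and inj: "inj_on \<alpha> D"
    using I by (auto simp: I_n_def D_def R_def)
  have mono: "\<And>x y. x \<in> D \<Longrightarrow> y \<in> D \<Longrightarrow> x \<le> y \<Longrightarrow> f x \<le> f y"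
    using assms(2) by (auto simp: POI_n_def D_def f_def)
  have af: "\<And>x. x \<in> D \<Longrightarrow> \<alpha> x = Some (f x)"
    by (auto simp: D_def f_def)
  have Rimg: "R = f ` D"
    by (force simp: R_def D_def f_def ran_def)
  have injf: "inj_on f D"
  proof (rule inj_onI)
    fix x y assume "x \<in> D" "y \<in> D" "f x = f y"
    then have "\<alpha> x = \<alpha> y" using af by simp
    then show "x = y" using inj \<open>x \<in> D\<close> \<open>y \<in> D\<close> by (auto dest: inj_onD)
  qed
  have smono: "\<And>x y. x \<in> D \<Longrightarrow> y \<in> D \<Longrightarrow> x < y \<Longrightarrow> f x < f y"
    using mono injf by (metis inj_onD less_imp_le nat_less_le)
  have finD: "finite D" using DS finite_subset by blast
  have cR: "card R = n - 1" using assms(3) by (simp add: rank_def R_def)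
  have cD: "card D = n - 1" using cR Rimg card_image[OF injf] by simp
  have "card ({1..n} - D) = 1" using cD DS assms(1) by (simp add: card_Diff_subset finD)
  then obtain d where dD: "{1..n} - D = {d}" by (meson card_1_singletonE)
  have finR: "finite R" using RS finite_subset by blast
  have "card ({1..n} - R) = 1" using cR RS assms(1) by (simp add: card_Diff_subset finR)
  then obtain i where iR: "{1..n} - R = {i}" by (meson card_1_singletonE)
  have de: "d_elem n \<alpha> = d" using dD by (simp add: d_elem_def D_def)
  have ie: "i_elem n \<alpha> = i" using iR by (simp add: i_elem_def R_def)
  have d1: "d \<in> {1..n}" using dD by blast
  have i1: "i \<in> {1..n}" using iR by blast
  have Deq: "D = {1..n} - {d}" using dD DS by blast
  have Req: "R = {1..n} - {i}" using iR RS by blast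
  have fR: "\<And>x. x \<in> D \<Longrightarrow> f x \<in> R" using Rimg by blast
  have key: "\<And>x. x \<in> D \<Longrightarrow> f x - (if i < f x then 1 else 0) = x - (if d < x then 1 else 0)"
  proof -
    fix x assume x: "x \<in> D"
    have "bij_betw f {z\<in>D. z \<le> x} {y\<in>R. y \<le> f x}"
    proof (rule bij_betw_imageI)
      show "inj_on f {z\<in>D. z \<le> x}" using injf by (rule inj_on_subset) auto
      show "f ` {z\<in>D. z \<le> x} = {y\<in>R. y \<le> f x}"
      proof
        show "f ` {z\<in>D. z \<le> x} \<subseteq> {y\<in>R. y \<le> f x}" using mono x fR by auto
        show "{y\<in>R. y \<le> f x} \<subseteq> f ` {z\<in>D. z \<le> x}"
        proof
          fix y assume y: "y \<in> {y\<in>R. y \<le> f x}"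
          then obtain z where z: "z \<in> D" "y = f z" using Rimg by blast
          have "z \<le> x" using smono[OF x z(1)] y z by force
          then show "y \<in> f ` {z\<in>D. z \<le> x}" using z by blast
        qed
      qed
    qed
    then have "card {z\<in>D. z \<le> x} = card {y\<in>R. y \<le> f x}" by (rule bij_betw_same_card)
    then show "f x - (if i < f x then 1 else 0) = x - (if d < x then 1 else 0)"
      using cnt_le[OF Deq d1 x] cnt_le[OF Req i1 fR[OF x]] by simp
  qed
  have fc: "\<And>x. x \<in> D \<Longrightarrow> f x = cperm n d i x"
  proof -
    fix x assume x: "x \<in> D"
    have xn: "x \<in> {1..n}" "x \<noteq> d" using x Deq by auto
    have fn: "f x \<in> {1..n}" "f x \<noteq> i" using fR[OF x] Req by auto
    show "f x = cperm n d i x"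
      using key[OF x] xn fn unfolding cperm_def Let_def
      by (cases "i < f x"; cases "d < x") auto
  qed
  have CM: "cperm n d i permutes {1..n} \<and> (evenperm (cperm n d i) \<longleftrightarrow> (even d \<longleftrightarrow> even i))"
    by (rule cperm_main[OF d1 i1])
  show ?thesis
  proof
    assume "\<alpha> \<in> AO_n n"
    then obtain \<sigma> where s: "\<sigma> permutes {1..n}" "evenperm \<sigma>" "\<forall>x\<in>dom \<alpha>. \<alpha> x = Some (\<sigma> x)"
      by (auto simp: AO_n_def AI_n_def)
    have sf: "\<And>x. x \<in> D \<Longrightarrow> \<sigma> x = f x" using s(3) af unfolding D_def by force
    have "\<sigma> = cperm n d i"
    proof
      fix x
      show "\<sigma> x = cperm n d i x"
      proof (cases "x \<in> {1..n}")
        case False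
        then show ?thesis using False by (simp add: cperm_def permutes_not_in[OF s(1) False] del: atLeastAtMost_iff)
      next
        case True
        show ?thesis
        proof (cases "x = d")
          case False
          then have "x \<in> D" using True Deq by blast
          then show ?thesis using sf fc by simp
        next
          case xd: True
          have "\<sigma> d \<in> {1..n}" using permutes_in_image[OF s(1)] d1 by blast
          moreover have "\<sigma> d \<notin> R"
          proof
            assume "\<sigma> d \<in> R"
            then obtain z where z: "z \<in> D" "\<sigma> d = f z" using Rimg by blast
            then have "\<sigma> z = \<sigma> d" using sf by simp
            then have "z = d" using permutes_inj[OF s(1)] by (auto dest: injD)
            then show False using z Deq by blast
          qed
          ultimately have "\<sigma> d = i" using iR by blast
          then show ?thesis using xd d1 by (simp add: cperm_def)
        qed
      qed
    qed
    then show "even (d_elem n \<alpha>) \<longleftrightarrow> even (i_elem n \<alpha>)" using CM s(2) de ie by simp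
  next
    assume "even (d_elem n \<alpha>) \<longleftrightarrow> even (i_elem n \<alpha>)"
    then have ev: "evenperm (cperm n d i)" using CM de ie by simp
    have "\<alpha> \<in> AI_n n" unfolding AI_n_def
      using I CM ev fc af unfolding D_def by fastforce
    then show "\<alpha> \<in> AO_n n" using assms(2) by (simp add: AO_n_def)
  qed
qed

end
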